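(* Let $K$ be a nonempty finite set and $X=\Delta(K)$. Let $u,v$ be probabilities on $X$ with finite supports $U$ and $V$ respectively. Then $$d_*(u,v)=\sup_{f\in D_1}|u(f)-v(f)|=\min_{(\alpha,\beta)\in\mathcal M_4(u,v)}\sum_{(x,y)\in U\times V}\|\alpha(x,y)\,x-\beta(x,y)\,y\|_1,$$ and the minimum is attained.
   Context: $X=\Delta(K)\subset\mathbb R^K$ with $\|p\|_1=\sum_k|p^k|$, and $u(f)=\sum_{x\in U}u(x)f(x)$. $D_1=\{f\in\mathcal C(X):\ \forall x,y\in X,\ \forall a,b\ge0,\ af(x)-bf(y)\le\|ax-by\|_1\}$. $\mathcal M_4(u,v)$ is the set of pairs $(\alpha,\beta)\in(\mathbb R_+^{U\times V})^2$ such that: - $\sum_{y'\in V}\alpha(x,y')=u(x)$ for all $x\in U$, and - $\sum_{x'\in U}\beta(x',y)=v(y)$ for all $y\in V$. *)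

theory Defs
  imports "HOL-Analysis.Analysis"
begin

text \<open>Points of R^K are functions 'k \<Rightarrow> real, with 'k a finite (hence nonempty) type;
  the topology is the product topology (= Euclidean topology).\<close>

definition DeltaK :: "('k::finite \<Rightarrow> real) set" where
  "DeltaK = {p. (\<forall>k. 0 \<le> p k) \<and> (\<Sum>k\<in>UNIV. p k) = 1}"

definition norm1 :: "('k::finite \<Rightarrow> real) \<Rightarrow> real" where
  "norm1 p = (\<Sum>k\<in>UNIV. \<bar>p k\<bar>)"

definition supp :: "(('k \<Rightarrow> real) \<Rightarrow> real) \<Rightarrow> ('k \<Rightarrow> real) set" where
  "supp u = {x. u x \<noteq> 0}"

definition fin_prob :: "(('k::finite \<Rightarrow> real) \<Rightarrow> real) \<Rightarrow> bool" where
  "fin_prob u \<longleftrightarrow> finite (supp u) \<and> supp u \<subseteq> DeltaK \<and> (\<forall>x. 0 \<le> u x)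
      \<and> (\<Sum>x\<in>supp u. u x) = 1"

definition integ :: "(('k \<Rightarrow> real) \<Rightarrow> real) \<Rightarrow> (('k \<Rightarrow> real) \<Rightarrow> real) \<Rightarrow> real" where
  "integ u f = (\<Sum>x\<in>supp u. u x * f x)"

definition D1 :: "(('k::finite \<Rightarrow> real) \<Rightarrow> real) set" where
  "D1 = {f. continuous_on DeltaK f \<and>
     (\<forall>x\<in>DeltaK. \<forall>y\<in>DeltaK. \<forall>a b. 0 \<le> a \<longrightarrow> 0 \<le> b \<longrightarrow>
        a * f x - b * f y \<le> norm1 (\<lambda>k. a * x k - b * y k))}"

definition d_star :: "(('k::finite \<Rightarrow> real) \<Rightarrow> real) \<Rightarrow> (('k \<Rightarrow> real) \<Rightarrow> real) \<Rightarrow> real" where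
  "d_star u v = (SUP f\<in>D1. \<bar>integ u f - integ v f\<bar>)"

text \<open>Elements of (R_+^{U\<times>V})^2, represented as functions vanishing outside U \<times> V.\<close>
definition M4 :: "(('k::finite \<Rightarrow> real) \<Rightarrow> real) \<Rightarrow> (('k \<Rightarrow> real) \<Rightarrow> real) \<Rightarrow>
    ((('k \<Rightarrow> real) \<Rightarrow> ('k \<Rightarrow> real) \<Rightarrow> real) \<times> (('k \<Rightarrow> real) \<Rightarrow> ('k \<Rightarrow> real) \<Rightarrow> real)) set" where
  "M4 u v = {(\<alpha>, \<beta>).
      (\<forall>x y. (x \<in> supp u \<and> y \<in> supp v) \<longrightarrow> 0 \<le> \<alpha> x y \<and> 0 \<le> \<beta> x y) \<and>
      (\<forall>x y. \<not> (x \<in> supp u \<and> y \<in> supp v) \<longrightarrow> \<alpha> x y = 0 \<and> \<beta> x y = 0) \<and>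
      (\<forall>x\<in>supp u. (\<Sum>y'\<in>supp v. \<alpha> x y') = u x) \<and>
      (\<forall>y\<in>supp v. (\<Sum>x'\<in>supp u. \<beta> x' y) = v y)}"

definition cost :: "(('k::finite \<Rightarrow> real) \<Rightarrow> real) \<Rightarrow> (('k \<Rightarrow> real) \<Rightarrow> real) \<Rightarrow>
    (('k \<Rightarrow> real) \<Rightarrow> ('k \<Rightarrow> real) \<Rightarrow> real) \<Rightarrow> (('k \<Rightarrow> real) \<Rightarrow> ('k \<Rightarrow> real) \<Rightarrow> real) \<Rightarrow> real" where
  "cost u v \<alpha> \<beta> = (\<Sum>(x, y)\<in>supp u \<times> supp v. norm1 (\<lambda>k. \<alpha> x y * x k - \<beta> x y * y k))"

end

theory Submission
  imports Defs
begin


definition psimp :: "'a set \<Rightarrow> ('a \<Rightarrow> real) set" where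
  "psimp A = {p. (\<forall>a. 0 \<le> p a) \<and> (\<forall>a. a \<notin> A \<longrightarrow> p a = 0) \<and> sum p A = 1}"

lemma compact_psimp:
  assumes "finite A" shows "compact (psimp A)"
proof -
  define S where "S = (\<lambda>i. if i \<in> A then {0..1::real} else {0})"
  have eq: "psimp A = PiE UNIV S \<inter> {p. sum p A = 1}"
  proof (intro set_eqI iffI)
    fix p assume p: "p \<in> psimp A"
    have "p i \<le> 1" if "i \<in> A" for i
    proof -
      have "p i \<le> sum p A" using p that assms by (intro member_le_sum) (auto simp: psimp_def)
      thus ?thesis using p by (simp add: psimp_def)
    qed
    thus "p \<in> PiE UNIV S \<inter> {p. sum p A = 1}" using p by (auto simp: psimp_def S_def)
  next
    fix p assume "p \<in> PiE UNIV S \<inter> {p. sum p A = 1}"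
    then have h: "\<And>i. p i \<in> S i" "sum p A = 1" by (auto simp: PiE_iff)
    have "0 \<le> p i" for i using h(1)[of i] by (auto simp: S_def split: if_splits)
    moreover have "i \<notin> A \<Longrightarrow> p i = 0" for i using h(1)[of i] by (auto simp: S_def)
    ultimately show "p \<in> psimp A" using h(2) by (auto simp: psimp_def)
  qed
  have c1: "compact (PiE UNIV S)"
  proof -
    have "compactin (product_topology (\<lambda>i. euclidean) UNIV) (PiE UNIV S)"
      by (subst compactin_PiE) (auto simp: S_def)
    thus ?thesis by (simp add: euclidean_product_topology)
  qed
  have c2: "closed {p::'a \<Rightarrow> real. sum p A = 1}"
    by (intro closed_Collect_eq continuous_on_sum continuous_on_product_coordinates continuous_on_const)
  show ?thesis unfolding eq using c1 c2 by (rule compact_Int_closed)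
qed

lemma continuous_on_Max_fam:
  fixes g :: "'b \<Rightarrow> 'c::topological_space \<Rightarrow> real"
  assumes "finite B" "B \<noteq> {}" "\<And>b. b \<in> B \<Longrightarrow> continuous_on S (g b)"
  shows "continuous_on S (\<lambda>p. Max ((\<lambda>b. g b p) ` B))"
  using assms
proof (induction B rule: finite_ne_induct)
  case (singleton x) then show ?case by simp
next
  case (insert x F)
  have "continuous_on S (\<lambda>p. max (g x p) (Max ((\<lambda>b. g b p) ` F)))"
    using insert by (intro continuous_on_max) auto
  then show ?case using insert by simp
qed

lemma continuous_on_Min_fam:
  fixes g :: "'b \<Rightarrow> 'c::topological_space \<Rightarrow> real"
  assumes "finite B" "B \<noteq> {}" "\<And>b. b \<in> B \<Longrightarrow> continuous_on S (g b)"
  shows "continuous_on S (\<lambda>p. Min ((\<lambda>b. g b p) ` B))"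
  using assms
proof (induction B rule: finite_ne_induct)
  case (singleton x) then show ?case by simp
next
  case (insert x F)
  have "continuous_on S (\<lambda>p. min (g x p) (Min ((\<lambda>b. g b p) ` F)))"
    using insert by (intro continuous_on_min) auto
  then show ?case using insert by simp
qed

definition mxG :: "'a set \<Rightarrow> 'b set \<Rightarrow> ('a \<Rightarrow> 'b \<Rightarrow> real) \<Rightarrow> ('a \<Rightarrow> real) \<Rightarrow> real" where
  "mxG A B M p = Max ((\<lambda>b. \<Sum>a\<in>A. p a * M a b) ` B)"

definition saddle :: "'a set \<Rightarrow> 'b set \<Rightarrow> ('a \<Rightarrow> 'b \<Rightarrow> real) \<Rightarrow> bool" where
  "saddle A B M \<longleftrightarrow> (\<exists>p\<in>psimp A. \<exists>q\<in>psimp B. \<forall>a\<in>A. \<forall>b\<in>B.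
      (\<Sum>a'\<in>A. p a' * M a' b) \<le> (\<Sum>b'\<in>B. q b' * M a b'))"

lemma saddle_transpose:
  assumes "saddle A B M" shows "saddle B A (\<lambda>b a. - M a b)"
  using assms unfolding saddle_def by (auto simp: sum_negf)

lemma mxG_ge: "finite B \<Longrightarrow> b \<in> B \<Longrightarrow> (\<Sum>a\<in>A. p a * M a b) \<le> mxG A B M p"
  unfolding mxG_def by (rule Max_ge) auto

lemma mxG_in: "finite B \<Longrightarrow> B \<noteq> {} \<Longrightarrow> \<exists>b\<in>B. mxG A B M p = (\<Sum>a\<in>A. p a * M a b)"
proof -
  assume "finite B" "B \<noteq> {}"
  then have "mxG A B M p \<in> (\<lambda>b. \<Sum>a\<in>A. p a * M a b) ` B" unfolding mxG_def by (intro Max_in) auto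
  then show ?thesis by auto
qed

lemma mxG_less: "finite B \<Longrightarrow> B \<noteq> {} \<Longrightarrow> mxG A B M p < c \<longleftrightarrow> (\<forall>b\<in>B. (\<Sum>a\<in>A. p a * M a b) < c)"
  unfolding mxG_def by (subst Max_less_iff) auto

lemma psimp_mono: "p \<in> psimp B' \<Longrightarrow> B' \<subseteq> B \<Longrightarrow> finite B \<Longrightarrow> p \<in> psimp B"
  unfolding psimp_def by (auto, subst sum.mono_neutral_right[of B B']) auto

lemma psimp_mix:
  assumes "p \<in> psimp A" "p' \<in> psimp A" "0 \<le> t" "t \<le> 1"
  shows "(\<lambda>a. t * p' a + (1 - t) * p a) \<in> psimp A"
  using assms unfolding psimp_def by (auto simp: sum.distrib sum_distrib_left[symmetric])

lemma half:
  fixes M :: "'a \<Rightarrow> 'b \<Rightarrow> real"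
  assumes fin: "finite A" "A \<noteq> {}" "finite B" "B \<noteq> {}"
    and IH: "\<And>b. b \<in> B \<Longrightarrow> B - {b} \<noteq> {} \<Longrightarrow> saddle A (B - {b}) M"
    and p0: "p0 \<in> psimp A" and opt: "\<And>p. p \<in> psimp A \<Longrightarrow> mxG A B M p0 \<le> mxG A B M p"
    and H: "\<And>q. q \<in> psimp B \<Longrightarrow> \<exists>a\<in>A. (\<Sum>b\<in>B. q b * M a b) < mxG A B M p0"
  shows "\<forall>b\<in>B. (\<Sum>a\<in>A. p0 a * M a b) = mxG A B M p0"
proof (rule ccontr)
  let ?g = "mxG A B M p0"
  assume "\<not> ?thesis"
  then obtain b0 where b0: "b0 \<in> B" "(\<Sum>a\<in>A. p0 a * M a b0) \<noteq> ?g" by blast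
  have lt: "(\<Sum>a\<in>A. p0 a * M a b0) < ?g"
    using mxG_ge[OF fin(3) b0(1), where A=A and p=p0 and M=M] b0(2) by linarith
  have ne: "B - {b0} \<noteq> {}"
  proof
    assume "B - {b0} = {}"
    then have "B = {b0}" using b0 by auto
    then show False using lt by (simp add: mxG_def)
  qed
  obtain p' q' where p': "p' \<in> psimp A" and q': "q' \<in> psimp (B - {b0})"
    and sad: "\<And>a b. a \<in> A \<Longrightarrow> b \<in> B - {b0} \<Longrightarrow> (\<Sum>a'\<in>A. p' a' * M a' b) \<le> (\<Sum>b'\<in>B - {b0}. q' b' * M a b')"
    using IH[OF b0(1) ne] unfolding saddle_def by blast
  have q'B: "q' \<in> psimp B" using psimp_mono[OF q'] fin by auto
  obtain a1 where a1: "a1 \<in> A" "(\<Sum>b\<in>B. q' b * M a1 b) < ?g" using H[OF q'B] by blast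
  have "(\<Sum>b\<in>B. q' b * M a1 b) = (\<Sum>b\<in>B - {b0}. q' b * M a1 b)"
    using q' fin b0 by (intro sum.mono_neutral_right) (auto simp: psimp_def)
  then have pl: "\<And>b. b \<in> B - {b0} \<Longrightarrow> (\<Sum>a\<in>A. p' a * M a b) < ?g"
    using sad[OF a1(1)] a1(2) by fastforce
  define d where "d = ?g - (\<Sum>a\<in>A. p0 a * M a b0)"
  define D where "D = \<bar>(\<Sum>a\<in>A. p' a * M a b0) - (\<Sum>a\<in>A. p0 a * M a b0)\<bar>"
  define t where "t = d / (d + D)"
  have d: "d > 0" using lt by (simp add: d_def)
  have D: "D \<ge> 0" by (simp add: D_def)
  have t: "0 < t" "t \<le> 1" using d D by (auto simp: t_def)
  have tD: "t * D < d"
  proof -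
    have "t * D = d * D / (d + D)" by (simp add: t_def)
    also have "\<dots> < d" using d D by (simp add: divide_less_eq)
    finally show ?thesis .
  qed
  define pt where "pt = (\<lambda>a. t * p' a + (1 - t) * p0 a)"
  have pt: "pt \<in> psimp A" unfolding pt_def using p0 p' t by (intro psimp_mix) auto
  have lin: "(\<Sum>a\<in>A. pt a * M a b) = t * (\<Sum>a\<in>A. p' a * M a b) + (1 - t) * (\<Sum>a\<in>A. p0 a * M a b)" for b
    by (simp add: pt_def sum_distrib_left sum.distrib[symmetric] algebra_simps)
  have "\<forall>b\<in>B. (\<Sum>a\<in>A. pt a * M a b) < ?g"
  proof
    fix b assume b: "b \<in> B"
    show "(\<Sum>a\<in>A. pt a * M a b) < ?g"
    proof (cases "b = b0")
      case True
      have "t * (\<Sum>a\<in>A. p' a * M a b0) + (1 - t) * (\<Sum>a\<in>A. p0 a * M a b0)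
          = (\<Sum>a\<in>A. p0 a * M a b0) + t * ((\<Sum>a\<in>A. p' a * M a b0) - (\<Sum>a\<in>A. p0 a * M a b0))"
        by (simp add: algebra_simps)
      also have "\<dots> \<le> (\<Sum>a\<in>A. p0 a * M a b0) + t * D"
        using t unfolding D_def by (intro add_left_mono mult_left_mono) auto
      also have "\<dots> < ?g" using tD by (simp add: d_def)
      finally show ?thesis using True lin by simp
    next
      case False
      then have "(\<Sum>a\<in>A. p' a * M a b) < ?g" using pl b by auto
      moreover have "(\<Sum>a\<in>A. p0 a * M a b) \<le> ?g" using mxG_ge[OF fin(3) b] .
      ultimately have "t * (\<Sum>a\<in>A. p' a * M a b) + (1 - t) * (\<Sum>a\<in>A. p0 a * M a b) < t * ?g + (1 - t) * ?g"
        using t by (intro add_less_le_mono mult_strict_left_mono mult_left_mono) auto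
      then show ?thesis using lin[of b] by (simp add: algebra_simps)
    qed
  qed
  then have "mxG A B M pt < ?g" using mxG_less[OF fin(3,4)] by blast
  with opt[OF pt] show False by simp
qed

lemma psimp_ne: "a \<in> A \<Longrightarrow> finite A \<Longrightarrow> (\<lambda>x. if x = a then 1 else 0) \<in> psimp A"
  unfolding psimp_def by auto

lemma cont_mxG: assumes "finite B" "B \<noteq> {}" shows "continuous_on S (mxG A B M)"
  unfolding mxG_def
proof (rule continuous_on_Max_fam[OF assms])
  fix b
  have "\<And>a. continuous_on S (\<lambda>p. p a)"
    by (rule continuous_on_product_then_coordinatewise[OF continuous_on_id])
  then show "continuous_on S (\<lambda>p. \<Sum>a\<in>A. p a * M a b)"
    by (intro continuous_on_sum continuous_on_mult_right) auto
qed

lemma exists_opt: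
  assumes "finite A" "A \<noteq> {}" "finite B" "B \<noteq> {}"
  shows "\<exists>p0\<in>psimp A. \<forall>p\<in>psimp A. mxG A B M p0 \<le> mxG A B M p"
proof -
  obtain a where "a \<in> A" using assms by auto
  then have "psimp A \<noteq> {}" using psimp_ne[of a A] assms by auto
  then show ?thesis using assms
    by (intro continuous_attains_inf compact_psimp cont_mxG) (auto intro: compact_psimp)
qed

lemma sum_psimp: "q \<in> psimp B \<Longrightarrow> (\<Sum>b\<in>B. q b * c) = c"
  unfolding psimp_def by (simp flip: sum_distrib_right)

lemma minimax:
  fixes M :: "'a \<Rightarrow> 'b \<Rightarrow> real"
  assumes "finite A" "A \<noteq> {}" "finite B" "B \<noteq> {}"
  shows "saddle A B M"
  using assms
proof (induction "card A + card B" arbitrary: A B M rule: less_induct)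
  case (less A B M)
  note fin = less.prems
  define M' where "M' = (\<lambda>b a. - M a b)"
  obtain p0 where p0: "p0 \<in> psimp A" and opt: "\<And>p. p \<in> psimp A \<Longrightarrow> mxG A B M p0 \<le> mxG A B M p"
    using exists_opt[OF fin] by blast
  obtain q0 where q0: "q0 \<in> psimp B" and opt': "\<And>q. q \<in> psimp B \<Longrightarrow> mxG B A M' q0 \<le> mxG B A M' q"
    using exists_opt[OF fin(3,4,1,2)] by blast
  show ?case
  proof (cases "mxG A B M p0 \<le> - mxG B A M' q0")
    case True
    have "\<forall>a\<in>A. \<forall>b\<in>B. (\<Sum>a'\<in>A. p0 a' * M a' b) \<le> (\<Sum>b'\<in>B. q0 b' * M a b')"
    proof (intro ballI)
      fix a b assume a: "a \<in> A" and b: "b \<in> B"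
      have "(\<Sum>b'\<in>B. q0 b' * M' b' a) \<le> mxG B A M' q0" by (rule mxG_ge[OF fin(1) a])
      then have "- mxG B A M' q0 \<le> (\<Sum>b'\<in>B. q0 b' * M a b')" by (simp add: M'_def sum_negf)
      then show "(\<Sum>a'\<in>A. p0 a' * M a' b) \<le> (\<Sum>b'\<in>B. q0 b' * M a b')"
        using mxG_ge[OF fin(3) b, where A=A and p=p0 and M=M] True by linarith
    qed
    then show ?thesis unfolding saddle_def using p0 q0 by blast
  next
    case False
    have h1: "\<forall>b\<in>B. (\<Sum>a\<in>A. p0 a * M a b) = mxG A B M p0"
    proof (rule half[OF fin _ p0 opt])
      fix b assume b: "b \<in> B" and ne: "B - {b} \<noteq> {}"
      have "card (B - {b}) < card B" using b fin by (simp add: card_gt_0_iff)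
      then show "saddle A (B - {b}) M" using less.hyps[of A "B - {b}"] fin ne by auto
    next
      fix q assume q: "q \<in> psimp B"
      obtain a where a: "a \<in> A" "mxG B A M' q = (\<Sum>b\<in>B. q b * M' b a)" using mxG_in[OF fin(1,2)] by blast
      have "(\<Sum>b\<in>B. q b * M a b) = - mxG B A M' q" using a by (simp add: M'_def sum_negf)
      also have "\<dots> \<le> - mxG B A M' q0" using opt'[OF q] by simp
      also have "\<dots> < mxG A B M p0" using False by simp
      finally show "\<exists>a\<in>A. (\<Sum>b\<in>B. q b * M a b) < mxG A B M p0" using a by blast
    qed
    have h2: "\<forall>a\<in>A. (\<Sum>b\<in>B. q0 b * M' b a) = mxG B A M' q0"
    proof (rule half[OF fin(3,4,1,2) _ q0 opt'])
      fix a assume a: "a \<in> A" and ne: "A - {a} \<noteq> {}"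
      have "card (A - {a}) < card A" using a fin by (simp add: card_gt_0_iff)
      then have "saddle (A - {a}) B M" using less.hyps[of "A - {a}" B] fin ne by auto
      then show "saddle B (A - {a}) M'" unfolding M'_def by (rule saddle_transpose)
    next
      fix p assume p: "p \<in> psimp A"
      obtain b where b: "b \<in> B" "mxG A B M p = (\<Sum>a\<in>A. p a * M a b)" using mxG_in[OF fin(3,4)] by blast
      have "(\<Sum>a\<in>A. p a * M' b a) = - mxG A B M p" using b by (simp add: M'_def sum_negf)
      also have "\<dots> \<le> - mxG A B M p0" using opt[OF p] by simp
      also have "\<dots> < mxG B A M' q0" using False by simp
      finally show "\<exists>b\<in>B. (\<Sum>a\<in>A. p a * M' b a) < mxG B A M' q0" using b by blast
    qed
    have "(\<Sum>b\<in>B. q0 b * (\<Sum>a\<in>A. p0 a * M a b)) = mxG A B M p0"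
      using h1 sum_psimp[OF q0] by simp
    moreover have "(\<Sum>a\<in>A. p0 a * (\<Sum>b\<in>B. q0 b * M' b a)) = mxG B A M' q0"
      using h2 sum_psimp[OF p0, of "mxG B A M' q0"] by simp
    moreover have "(\<Sum>a\<in>A. p0 a * (\<Sum>b\<in>B. q0 b * M' b a)) = - (\<Sum>b\<in>B. q0 b * (\<Sum>a\<in>A. p0 a * M a b))"
      unfolding M'_def by (simp add: sum_distrib_left sum_negf algebra_simps sum.swap[of _ A B])
    ultimately show ?thesis using False by simp
  qed
qed



definition lin :: "('k::finite \<Rightarrow> real) \<Rightarrow> ('k \<Rightarrow> real) \<Rightarrow> real" where
  "lin c z = (\<Sum>k\<in>UNIV. c k * z k)"

lemma fin_prob_props:
  assumes "fin_prob u"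
  shows "finite (supp u)" "supp u \<noteq> {}" "supp u \<subseteq> DeltaK" "\<And>x. 0 \<le> u x"
    "(\<Sum>x\<in>supp u. u x) = 1" "\<And>x. x \<notin> supp u \<Longrightarrow> u x = 0"
  using assms unfolding fin_prob_def supp_def by (auto, metis (mono_tags) empty_Collect_eq sum.empty zero_neq_one)

lemma norm1_swap: "norm1 (\<lambda>k. b * y k - a * x k) = norm1 (\<lambda>k. a * x k - b * y k)"
  unfolding norm1_def by (simp add: abs_minus_commute)

lemma weak:
  assumes u: "fin_prob u" and v: "fin_prob v" and f: "f \<in> D1" and ab: "(\<alpha>, \<beta>) \<in> M4 u v"
  shows "\<bar>integ u f - integ v f\<bar> \<le> cost u v \<alpha> \<beta>"
proof -
  let ?U = "supp u" and ?V = "supp v"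
  note U = fin_prob_props[OF u] and V = fin_prob_props[OF v]
  have M: "\<And>x y. x \<in> ?U \<Longrightarrow> y \<in> ?V \<Longrightarrow> 0 \<le> \<alpha> x y \<and> 0 \<le> \<beta> x y"
    "\<And>x. x \<in> ?U \<Longrightarrow> (\<Sum>y\<in>?V. \<alpha> x y) = u x"
    "\<And>y. y \<in> ?V \<Longrightarrow> (\<Sum>x\<in>?U. \<beta> x y) = v y"
    using ab unfolding M4_def by auto
  have iu: "integ u f = (\<Sum>x\<in>?U. \<Sum>y\<in>?V. \<alpha> x y * f x)"
    unfolding integ_def by (intro sum.cong refl) (simp add: M(2) flip: sum_distrib_right)
  have iv: "integ v f = (\<Sum>x\<in>?U. \<Sum>y\<in>?V. \<beta> x y * f y)"
    unfolding integ_def by (subst sum.swap) (intro sum.cong refl, simp add: M(3) flip: sum_distrib_right)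
  have d: "integ u f - integ v f = (\<Sum>x\<in>?U. \<Sum>y\<in>?V. \<alpha> x y * f x - \<beta> x y * f y)"
    unfolding iu iv by (simp add: sum_subtractf)
  have c: "cost u v \<alpha> \<beta> = (\<Sum>x\<in>?U. \<Sum>y\<in>?V. norm1 (\<lambda>k. \<alpha> x y * x k - \<beta> x y * y k))"
    unfolding cost_def by (simp add: sum.cartesian_product)
  have t: "\<bar>\<alpha> x y * f x - \<beta> x y * f y\<bar> \<le> norm1 (\<lambda>k. \<alpha> x y * x k - \<beta> x y * y k)"
    if x: "x \<in> ?U" and y: "y \<in> ?V" for x y
  proof -
    have xD: "x \<in> DeltaK" and yD: "y \<in> DeltaK" using x y U(3) V(3) by auto
    have D: "\<And>a b. 0 \<le> a \<Longrightarrow> 0 \<le> b \<Longrightarrow> a * f x - b * f y \<le> norm1 (\<lambda>k. a * x k - b * y k)"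
      "\<And>a b. 0 \<le> a \<Longrightarrow> 0 \<le> b \<Longrightarrow> a * f y - b * f x \<le> norm1 (\<lambda>k. a * y k - b * x k)"
      using f xD yD unfolding D1_def by auto
    show ?thesis using D(1)[of "\<alpha> x y" "\<beta> x y"] D(2)[of "\<beta> x y" "\<alpha> x y"] M(1)[OF x y]
      norm1_swap[of "\<beta> x y" y "\<alpha> x y" x] by (simp add: abs_le_iff)
  qed
  have "\<bar>integ u f - integ v f\<bar> \<le> (\<Sum>x\<in>?U. \<bar>\<Sum>y\<in>?V. \<alpha> x y * f x - \<beta> x y * f y\<bar>)"
    unfolding d by (rule sum_abs)
  also have "\<dots> \<le> (\<Sum>x\<in>?U. \<Sum>y\<in>?V. \<bar>\<alpha> x y * f x - \<beta> x y * f y\<bar>)"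
    by (intro sum_mono sum_abs)
  also have "\<dots> \<le> cost u v \<alpha> \<beta>" unfolding c by (intro sum_mono t)
  finally show ?thesis .
qed

definition FF :: "('a set) \<Rightarrow> ('b set) \<Rightarrow> ('a \<Rightarrow> 'b \<Rightarrow> 'k::finite \<Rightarrow> real) \<Rightarrow> ('k \<Rightarrow> real) \<Rightarrow> real" where
  "FF U V lam z = Max ((\<lambda>x. Min ((\<lambda>y. lin (lam x y) z) ` V)) ` U)"

lemma Max_shift_le:
  assumes "finite I" "I \<noteq> {}" "\<And>i. i \<in> I \<Longrightarrow> g i \<le> h i + L"
  shows "Max (g ` I) \<le> Max (h ` I) + (L::real)"
proof -
  have "\<forall>i\<in>I. g i \<le> Max (h ` I) + L"
    using assms by (metis Max_ge add_right_mono finite_imageI image_eqI order_trans)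
  then show ?thesis using assms by (subst Max_le_iff) auto
qed

lemma Min_shift_le:
  assumes "finite I" "I \<noteq> {}" "\<And>i. i \<in> I \<Longrightarrow> g i \<le> h i + L"
  shows "Min (g ` I) \<le> Min (h ` I) + (L::real)"
proof -
  have "Min (h ` I) \<in> h ` I" using assms by (intro Min_in) auto
  then obtain j where j: "j \<in> I" "Min (h ` I) = h j" by auto
  have "Min (g ` I) \<le> g j" using assms j by auto
  also have "\<dots> \<le> h j + L" using assms j by auto
  finally show ?thesis using j by simp
qed

lemma lin_lip:
  assumes "\<And>k. \<bar>c k\<bar> \<le> 1"
  shows "lin c p \<le> lin c q + norm1 (\<lambda>k. p k - q k)"
proof -
  have "lin c p - lin c q = (\<Sum>k\<in>UNIV. c k * (p k - q k))"
    unfolding lin_def by (simp add: sum_subtractf algebra_simps)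
  also have "\<dots> \<le> (\<Sum>k\<in>UNIV. \<bar>p k - q k\<bar>)"
  proof (rule sum_mono)
    fix k
    have "c k * (p k - q k) \<le> \<bar>c k * (p k - q k)\<bar>" by simp
    also have "\<dots> = \<bar>c k\<bar> * \<bar>p k - q k\<bar>" by (simp add: abs_mult)
    also have "\<dots> \<le> 1 * \<bar>p k - q k\<bar>" using assms by (intro mult_right_mono) auto
    finally show "c k * (p k - q k) \<le> \<bar>p k - q k\<bar>" by simp
  qed
  finally show ?thesis unfolding norm1_def by simp
qed

lemma lin_scale: "lin c (\<lambda>k. a * z k) = a * lin c z"
  unfolding lin_def by (simp add: sum_distrib_left algebra_simps)

lemma cont_lin: "continuous_on S (lin c)"
proof -
  have "\<And>k. continuous_on S (\<lambda>p. p k)"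
    by (rule continuous_on_product_then_coordinatewise[OF continuous_on_id])
  then show ?thesis unfolding lin_def[abs_def]
    by (intro continuous_on_sum continuous_on_mult_left) auto
qed

lemma FF_scale:
  assumes "finite U" "U \<noteq> {}" "finite V" "V \<noteq> {}" "0 \<le> a"
  shows "FF U V lam (\<lambda>k. a * z k) = a * FF U V lam z"
proof -
  have m: "mono ((*) a)" using assms(5) by (simp add: mono_def mult_left_mono)
  have "\<And>x. Min ((\<lambda>y. lin (lam x y) (\<lambda>k. a * z k)) ` V) = a * Min ((\<lambda>y. lin (lam x y) z) ` V)"
    using mono_Min_commute[OF m, of "(\<lambda>y. lin (lam x y) z) ` V" for x] assms
    by (simp add: lin_scale image_image)
  then show ?thesis unfolding FF_def
    using mono_Max_commute[OF m, of "(\<lambda>x. Min ((\<lambda>y. lin (lam x y) z) ` V)) ` U"] assms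
    by (simp add: image_image)
qed

lemma FF_D1:
  assumes "finite U" "U \<noteq> {}" "finite V" "V \<noteq> {}"
    and lam: "\<And>x y k. x \<in> U \<Longrightarrow> y \<in> V \<Longrightarrow> \<bar>lam x y k\<bar> \<le> 1"
  shows "FF U V lam \<in> D1"
proof -
  have cont: "continuous_on DeltaK (FF U V lam)"
    unfolding FF_def[abs_def] using assms
    by (intro continuous_on_Max_fam continuous_on_Min_fam cont_lin) auto
  have lip: "FF U V lam p \<le> FF U V lam q + norm1 (\<lambda>k. p k - q k)" for p q
    unfolding FF_def using assms
    by (intro Max_shift_le Min_shift_le lin_lip) auto
  have "a * FF U V lam x - b * FF U V lam y \<le> norm1 (\<lambda>k. a * x k - b * y k)"
    if "0 \<le> a" "0 \<le> b" for a b x y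
    using lip[of "\<lambda>k. a * x k" "\<lambda>k. b * y k"] FF_scale[OF assms(1-4) that(1), of lam x] FF_scale[OF assms(1-4) that(2), of lam y]
    by simp
  then show ?thesis unfolding D1_def using cont by auto
qed

lemma ex_argmin: "finite V \<Longrightarrow> V \<noteq> {} \<Longrightarrow> \<exists>y\<in>V. \<forall>y'\<in>V. (g y::real) \<le> g y'"
proof -
  assume a: "finite V" "V \<noteq> {}"
  then have "Min (g ` V) \<in> g ` V" by (intro Min_in) auto
  then obtain y where "y \<in> V" "g y = Min (g ` V)" by auto
  then show ?thesis using a by (metis Min_le finite_imageI image_eqI)
qed

lemma ex_argmax: "finite V \<Longrightarrow> V \<noteq> {} \<Longrightarrow> \<exists>y\<in>V. \<forall>y'\<in>V. (g y'::real) \<le> g y"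
proof -
  assume a: "finite V" "V \<noteq> {}"
  then have "Max (g ` V) \<in> g ` V" by (intro Max_in) auto
  then obtain y where "y \<in> V" "g y = Max (g ` V)" by auto
  then show ?thesis using a by (metis Max_ge finite_imageI image_eqI)
qed

lemma swap3: "(\<Sum>r\<in>R. p r * (\<Sum>x\<in>X. \<Sum>y\<in>Y. \<Sum>k\<in>K. T r x y k)) = (\<Sum>x\<in>X. \<Sum>y\<in>Y. \<Sum>k\<in>K. \<Sum>r\<in>R. p r * (T r x y k :: real))"
  by (simp add: sum_distrib_left sum.swap[of _ R])

lemma strong:
  fixes u v :: "('k::finite \<Rightarrow> real) \<Rightarrow> real"
  assumes u: "fin_prob u" and v: "fin_prob v"
  shows "\<exists>\<alpha> \<beta> f. (\<alpha>, \<beta>) \<in> M4 u v \<and> f \<in> D1 \<and> cost u v \<alpha> \<beta> \<le> integ u f - integ v f"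
proof -
  define U where "U = supp u"
  define V where "V = supp v"
  note U = fin_prob_props[OF u, folded U_def] and V = fin_prob_props[OF v, folded V_def]
  define AA where "AA = (U \<rightarrow>\<^sub>E V) \<times> (V \<rightarrow>\<^sub>E U)"
  define BB :: "(('k\<Rightarrow>real) \<Rightarrow> ('k\<Rightarrow>real) \<Rightarrow> 'k \<Rightarrow> real) set"
    where "BB = U \<rightarrow>\<^sub>E (V \<rightarrow>\<^sub>E (UNIV \<rightarrow>\<^sub>E {-1,1}))"
  define ar :: "((('k\<Rightarrow>real) \<Rightarrow> ('k\<Rightarrow>real)) \<times> (('k\<Rightarrow>real) \<Rightarrow> ('k\<Rightarrow>real))) \<Rightarrow> _"
    where "ar r x y = (if x \<in> U \<and> y \<in> V \<and> fst r x = y then u x else 0)" for r x y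
  define br :: "((('k\<Rightarrow>real) \<Rightarrow> ('k\<Rightarrow>real)) \<times> (('k\<Rightarrow>real) \<Rightarrow> ('k\<Rightarrow>real))) \<Rightarrow> _"
    where "br r x y = (if x \<in> U \<and> y \<in> V \<and> snd r y = x then v y else 0)" for r x y
  define M where "M r s = (\<Sum>x\<in>U. \<Sum>y\<in>V. \<Sum>k\<in>UNIV. s x y k * (ar r x y * x k - br r x y * y k))" for r s
  have finA: "finite AA" "AA \<noteq> {}" using U V by (auto simp: AA_def finite_PiE PiE_eq_empty_iff)
  have finB: "finite BB" "BB \<noteq> {}" using U V by (auto simp: BB_def finite_PiE PiE_eq_empty_iff)
  obtain p q where p: "p \<in> psimp AA" and q: "q \<in> psimp BB"
    and sad: "\<And>r s. r \<in> AA \<Longrightarrow> s \<in> BB \<Longrightarrow> (\<Sum>r'\<in>AA. p r' * M r' s) \<le> (\<Sum>s'\<in>BB. q s' * M r s')"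
    using minimax[OF finA finB, of M] unfolding saddle_def by blast
  define \<alpha> where "\<alpha> x y = (\<Sum>r\<in>AA. p r * ar r x y)" for x y
  define \<beta> where "\<beta> x y = (\<Sum>r\<in>AA. p r * br r x y)" for x y
  define lam where "lam x y k = (\<Sum>s\<in>BB. q s * s x y k)" for x y k
  have pp: "\<And>r. 0 \<le> p r" "sum p AA = 1" using p by (auto simp: psimp_def)
  have qq: "\<And>s. 0 \<le> q s" "sum q BB = 1" using q by (auto simp: psimp_def)
  have rowr: "(\<Sum>y\<in>V. ar r x y) = u x" if "r \<in> AA" "x \<in> U" for r x
  proof -
    have "fst r x \<in> V" using that by (auto simp: AA_def)
    then show ?thesis using that V(1) by (simp add: ar_def)
  qed
  have colr: "(\<Sum>x\<in>U. br r x y) = v y" if "r \<in> AA" "y \<in> V" for r y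
  proof -
    have "snd r y \<in> U" using that by (auto simp: AA_def)
    then show ?thesis using that U(1) by (simp add: br_def)
  qed
  have M4: "(\<alpha>, \<beta>) \<in> M4 u v"
  proof -
    have "0 \<le> \<alpha> x y \<and> 0 \<le> \<beta> x y" for x y
      unfolding \<alpha>_def \<beta>_def using pp U(4) V(4)
      by (auto intro!: sum_nonneg mult_nonneg_nonneg simp: ar_def br_def)
    moreover have "\<not> (x \<in> U \<and> y \<in> V) \<Longrightarrow> \<alpha> x y = 0 \<and> \<beta> x y = 0" for x y
      unfolding \<alpha>_def \<beta>_def ar_def br_def by auto
    moreover have "(\<Sum>y'\<in>V. \<alpha> x y') = u x" if "x \<in> U" for x
    proof -
      have "(\<Sum>y'\<in>V. \<alpha> x y') = (\<Sum>r\<in>AA. p r * (\<Sum>y\<in>V. ar r x y))"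
        unfolding \<alpha>_def by (simp add: sum_distrib_left sum.swap[of _ V])
      also have "\<dots> = (\<Sum>r\<in>AA. p r * u x)" using rowr that by simp
      also have "\<dots> = u x" using pp by (simp flip: sum_distrib_right)
      finally show ?thesis .
    qed
    moreover have "(\<Sum>x'\<in>U. \<beta> x' y) = v y" if "y \<in> V" for y
    proof -
      have "(\<Sum>x'\<in>U. \<beta> x' y) = (\<Sum>r\<in>AA. p r * (\<Sum>x\<in>U. br r x y))"
        unfolding \<beta>_def by (simp add: sum_distrib_left sum.swap[of _ U])
      also have "\<dots> = (\<Sum>r\<in>AA. p r * v y)" using colr that by simp
      also have "\<dots> = v y" using pp by (simp flip: sum_distrib_right)
      finally show ?thesis .
    qed
    ultimately show ?thesis unfolding M4_def U_def V_def by blast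
  qed
  have lam1: "\<bar>lam x y k\<bar> \<le> 1" if "x \<in> U" "y \<in> V" for x y k
  proof -
    have "\<bar>lam x y k\<bar> \<le> (\<Sum>s\<in>BB. \<bar>q s * s x y k\<bar>)" unfolding lam_def by (rule sum_abs)
    also have "\<dots> = (\<Sum>s\<in>BB. q s)"
    proof (rule sum.cong[OF refl])
      fix s assume "s \<in> BB"
      then have "s x y k \<in> {-1,1}" using that by (auto simp: BB_def PiE_iff)
      then show "\<bar>q s * s x y k\<bar> = q s" using qq(1)[of s] by (auto simp: abs_mult)
    qed
    finally show ?thesis using qq(2) by simp
  qed
  have lin1: "(\<Sum>r\<in>AA. p r * M r s) = (\<Sum>x\<in>U. \<Sum>y\<in>V. \<Sum>k\<in>UNIV. s x y k * (\<alpha> x y * x k - \<beta> x y * y k))" for s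
  proof -
    have "(\<Sum>r\<in>AA. p r * M r s) = (\<Sum>x\<in>U. \<Sum>y\<in>V. \<Sum>k\<in>UNIV. \<Sum>r\<in>AA. p r * (s x y k * (ar r x y * x k - br r x y * y k)))"
      unfolding M_def by (rule swap3)
    also have "\<dots> = (\<Sum>x\<in>U. \<Sum>y\<in>V. \<Sum>k\<in>UNIV. s x y k * (\<alpha> x y * x k - \<beta> x y * y k))"
      unfolding \<alpha>_def \<beta>_def
      by (intro sum.cong refl) (simp add: sum_distrib_left sum_distrib_right sum_subtractf algebra_simps)
    finally show ?thesis .
  qed
  have lin2: "(\<Sum>s\<in>BB. q s * M r s) = (\<Sum>x\<in>U. \<Sum>y\<in>V. \<Sum>k\<in>UNIV. lam x y k * (ar r x y * x k - br r x y * y k))" for r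
  proof -
    have "(\<Sum>s\<in>BB. q s * M r s) = (\<Sum>x\<in>U. \<Sum>y\<in>V. \<Sum>k\<in>UNIV. \<Sum>s\<in>BB. q s * (s x y k * (ar r x y * x k - br r x y * y k)))"
      unfolding M_def by (rule swap3)
    also have "\<dots> = (\<Sum>x\<in>U. \<Sum>y\<in>V. \<Sum>k\<in>UNIV. lam x y k * (ar r x y * x k - br r x y * y k))"
      unfolding lam_def
      by (intro sum.cong refl) (simp add: sum_distrib_right mult.assoc)
    finally show ?thesis .
  qed
  define sstar where "sstar = (\<lambda>x\<in>U. \<lambda>y\<in>V. \<lambda>k. if 0 \<le> \<alpha> x y * x k - \<beta> x y * y k then 1 else (-1::real))"
  have sB: "sstar \<in> BB" unfolding sstar_def BB_def by (auto simp: PiE_iff)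
  have cost: "cost u v \<alpha> \<beta> = (\<Sum>r\<in>AA. p r * M r sstar)"
  proof -
    have "cost u v \<alpha> \<beta> = (\<Sum>x\<in>U. \<Sum>y\<in>V. norm1 (\<lambda>k. \<alpha> x y * x k - \<beta> x y * y k))"
      unfolding cost_def U_def V_def by (simp add: sum.cartesian_product)
    also have "\<dots> = (\<Sum>x\<in>U. \<Sum>y\<in>V. \<Sum>k\<in>UNIV. sstar x y k * (\<alpha> x y * x k - \<beta> x y * y k))"
      unfolding norm1_def sstar_def by (intro sum.cong refl) auto
    finally show ?thesis using lin1 by simp
  qed
  obtain \<sigma> where \<sigma>: "\<And>x. x \<in> U \<Longrightarrow> \<sigma> x \<in> V \<and> (\<forall>y'\<in>V. lin (lam x (\<sigma> x)) x \<le> lin (lam x y') x)"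
  proof -
    have "\<forall>x\<in>U. \<exists>y\<in>V. \<forall>y'\<in>V. lin (lam x y) x \<le> lin (lam x y') x"
      using ex_argmin[OF V(1,2), where g="\<lambda>y. lin (lam x y) x" for x] by blast
    then show ?thesis using that by (metis (no_types, lifting) bchoice)
  qed
  obtain \<tau> where \<tau>: "\<And>y. y \<in> V \<Longrightarrow> \<tau> y \<in> U \<and> (\<forall>x'\<in>U. lin (lam x' y) y \<le> lin (lam (\<tau> y) y) y)"
  proof -
    have "\<forall>y\<in>V. \<exists>x\<in>U. \<forall>x'\<in>U. lin (lam x' y) y \<le> lin (lam x y) y"
      using ex_argmax[OF U(1,2), where g="\<lambda>x. lin (lam x y) y" for y] by blast
    then show ?thesis using that by (metis (no_types, lifting) bchoice)
  qed
  define r0 where "r0 = (restrict \<sigma> U, restrict \<tau> V)"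
  have r0: "r0 \<in> AA" using \<sigma> \<tau> unfolding r0_def AA_def by auto
  define f where "f = FF U V lam"
  have f: "f \<in> D1" unfolding f_def using U V lam1 by (intro FF_D1) auto
  have val: "(\<Sum>s\<in>BB. q s * M r0 s) = (\<Sum>x\<in>U. u x * lin (lam x (\<sigma> x)) x) - (\<Sum>y\<in>V. v y * lin (lam (\<tau> y) y) y)"
  proof -
    have "(\<Sum>s\<in>BB. q s * M r0 s) = (\<Sum>x\<in>U. \<Sum>y\<in>V. ar r0 x y * lin (lam x y) x - br r0 x y * lin (lam x y) y)"
      unfolding lin2 lin_def
      by (intro sum.cong refl) (simp add: sum_distrib_left sum_subtractf algebra_simps)
    also have "\<dots> = (\<Sum>x\<in>U. \<Sum>y\<in>V. ar r0 x y * lin (lam x y) x) - (\<Sum>y\<in>V. \<Sum>x\<in>U. br r0 x y * lin (lam x y) y)"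
      by (simp add: sum_subtractf sum.swap[of _ U])
    also have "(\<Sum>x\<in>U. \<Sum>y\<in>V. ar r0 x y * lin (lam x y) x) = (\<Sum>x\<in>U. u x * lin (lam x (\<sigma> x)) x)"
    proof (rule sum.cong[OF refl])
      fix x assume x: "x \<in> U"
      have "(\<Sum>y\<in>V. ar r0 x y * lin (lam x y) x) = (\<Sum>y\<in>V. if y = \<sigma> x then u x * lin (lam x y) x else 0)"
        using x by (intro sum.cong refl) (auto simp: ar_def r0_def)
      also have "\<dots> = u x * lin (lam x (\<sigma> x)) x" using \<sigma>[OF x] V(1) by (simp add: sum.delta)
      finally show "(\<Sum>y\<in>V. ar r0 x y * lin (lam x y) x) = u x * lin (lam x (\<sigma> x)) x" .
    qed
    also have "(\<Sum>y\<in>V. \<Sum>x\<in>U. br r0 x y * lin (lam x y) y) = (\<Sum>y\<in>V. v y * lin (lam (\<tau> y) y) y)"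
    proof (rule sum.cong[OF refl])
      fix y assume y: "y \<in> V"
      have "(\<Sum>x\<in>U. br r0 x y * lin (lam x y) y) = (\<Sum>x\<in>U. if x = \<tau> y then v y * lin (lam x y) y else 0)"
        using y by (intro sum.cong refl) (auto simp: br_def r0_def)
      also have "\<dots> = v y * lin (lam (\<tau> y) y) y" using \<tau>[OF y] U(1) by (simp add: sum.delta)
      finally show "(\<Sum>x\<in>U. br r0 x y * lin (lam x y) y) = v y * lin (lam (\<tau> y) y) y" .
    qed
    finally show ?thesis .
  qed
  have fu: "(\<Sum>x\<in>U. u x * lin (lam x (\<sigma> x)) x) \<le> integ u f"
    unfolding integ_def U_def[symmetric]
  proof (rule sum_mono)
    fix x assume x: "x \<in> U"
    have "lin (lam x (\<sigma> x)) x \<le> Min ((\<lambda>y. lin (lam x y) x) ` V)"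
      using \<sigma>[OF x] V(1,2) by (subst Min_ge_iff) auto
    also have "\<dots> \<le> f x" unfolding f_def FF_def using x U(1) by (intro Max_ge) auto
    finally show "u x * lin (lam x (\<sigma> x)) x \<le> u x * f x" using U(4) by (intro mult_left_mono) auto
  qed
  have fv: "integ v f \<le> (\<Sum>y\<in>V. v y * lin (lam (\<tau> y) y) y)"
    unfolding integ_def V_def[symmetric]
  proof (rule sum_mono)
    fix y assume y: "y \<in> V"
    have "f y \<le> lin (lam (\<tau> y) y) y" unfolding f_def FF_def
    proof (subst Max_le_iff, goal_cases)
      case 3
      show ?case
      proof
        fix m assume "m \<in> (\<lambda>x. Min ((\<lambda>y'. lin (lam x y') y) ` V)) ` U"
        then obtain x where x: "x \<in> U" "m = Min ((\<lambda>y'. lin (lam x y') y) ` V)" by auto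
        have "m \<le> lin (lam x y) y" using x y V(1) by (simp add: Min_le)
        also have "\<dots> \<le> lin (lam (\<tau> y) y) y" using \<tau>[OF y] x by auto
        finally show "m \<le> lin (lam (\<tau> y) y) y" .
      qed
    qed (use U(1,2) in auto)
    then show "v y * f y \<le> v y * lin (lam (\<tau> y) y) y" using V(4) by (intro mult_left_mono) auto
  qed
  have "cost u v \<alpha> \<beta> \<le> integ u f - integ v f"
    using sad[OF r0 sB] cost val fu fv by linarith
  then show ?thesis using M4 f by blast
qed

theorem theorem2:
  fixes u v :: "('k::finite \<Rightarrow> real) \<Rightarrow> real"
  assumes "fin_prob u" and "fin_prob v"
  shows "bdd_above ((\<lambda>f. \<bar>integ u f - integ v f\<bar>) ` D1) \<and>
    (\<exists>(\<alpha>, \<beta>)\<in>M4 u v. d_star u v = cost u v \<alpha> \<beta> \<and>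
        (\<forall>(\<alpha>', \<beta>')\<in>M4 u v. cost u v \<alpha> \<beta> \<le> cost u v \<alpha>' \<beta>'))"
proof -
  obtain \<alpha> \<beta> f where ab: "(\<alpha>, \<beta>) \<in> M4 u v" and f: "f \<in> D1"
    and c: "cost u v \<alpha> \<beta> \<le> integ u f - integ v f"
    using strong[OF assms] by blast
  have w: "\<And>g. g \<in> D1 \<Longrightarrow> \<bar>integ u g - integ v g\<bar> \<le> cost u v \<alpha> \<beta>"
    using weak[OF assms _ ab] by blast
  have bdd: "bdd_above ((\<lambda>f. \<bar>integ u f - integ v f\<bar>) ` D1)"
    using w by (intro bdd_aboveI) auto
  have ne: "(D1 :: (('k \<Rightarrow> real) \<Rightarrow> real) set) \<noteq> {}" using f by auto
  have "d_star u v \<le> cost u v \<alpha> \<beta>" unfolding d_star_def using w ne by (intro cSUP_least) auto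
  moreover have "\<bar>integ u f - integ v f\<bar> \<le> d_star u v" unfolding d_star_def
    using f bdd by (rule cSUP_upper)
  ultimately have eq: "d_star u v = cost u v \<alpha> \<beta>" using c by linarith
  have "\<forall>(\<alpha>', \<beta>')\<in>M4 u v. cost u v \<alpha> \<beta> \<le> cost u v \<alpha>' \<beta>'"
  proof (clarify)
    fix \<alpha>' \<beta>' assume "(\<alpha>', \<beta>') \<in> M4 u v"
    from weak[OF assms f this] c show "cost u v \<alpha> \<beta> \<le> cost u v \<alpha>' \<beta>'" by linarith
  qed
  then show ?thesis using bdd eq ab by blast
qed

end
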